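(* Let $q$ be a prime with $q \equiv 1 \pmod 6$ or $q = 3$. Let $j \in \{3,6\}$ and let $s$ be an integer with $0 \le s < q$ such that $\Phi_j(s) \equiv 0 \pmod q$, where $\Phi_3(x) = x^2+x+1$ and $\Phi_6(x) = x^2-x+1$. Define $p_6(x) = \Phi_4(qx+s) = (qx+s)^2+1 \in \mathbb{Z}[x]$, \[ n_6(x)= \begin{cases} qx^2+(2s+1)x+\Phi_3(s)/q, & \text{if } q \mid \Phi_3(s),\\ qx^2+(2s-1)x+\Phi_6(s)/q, & \text{if } q \mid \Phi_6(s),\end{cases} \qquad t_6(x)= \begin{cases} 1-qx-s, & \text{if } q \mid \Phi_3(s),\\ 1+qx+s, & \text{if } q \mid \Phi_6(s).\end{cases} \] Then: (i) $q\,n_6(x) = p_6(x)+1-t_6(x)$; (ii) $q\,n_6(x)$ divides $\Phi_6(p_6(x))$ in $\mathbb{Z}[x]$; (iii) $t_6(x)^2-4p_6(x) \le 0$ for all $x$; (iv) $n_6(x)$ and $p_6(x)$ are irreducible over $\mathbb{Z}$; that is, $(n_6(x),p_6(x),t_6(x))$ parameterizes a family of generalized MNT elliptic curves with embedding degree $6$ in the sense described in the context. Moreover, for every integer $x$, if one writes $t_6(x)^2-4p_6(x) = \Delta Y^2$ with $\Delta<0$ a square-free integer and $Y \in \mathbb{Z}$, then \[ X^2 + 3\Delta Y^2 = -8, \qquad \text{where } X = \begin{cases} 3(qx+s)+1, & \text{if } q \mid \Phi_3(s),\\ 3(qx+s)-1, & \text{if } q \mid \Phi_6(s).\end{cases}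 \]
   Context: $\Phi_k(x)$ denotes the $k$th cyclotomic polynomial; $\Phi_3(x)=x^2+x+1$, $\Phi_4(x)=x^2+1$, $\Phi_6(x)=x^2-x+1$. A polynomial in $\mathbb{Z}[x]$ is called irreducible over $\mathbb{Z}$ if it is not a product of two non-constant polynomials with integer coefficients. For $k\in\{3,4,6\}$ and a prime $q$, a triple $(n_k(x),p_k(x),t_k(x))$ of polynomials in $\mathbb{Z}[x]$ is said to parameterize a family of generalized MNT elliptic curves with embedding degree $k$ if $q\,n_k(x) = p_k(x)+1-t_k(x)$, $q\,n_k(x) \mid \Phi_k(p_k(x))$, $t_k(x)^2-4p_k(x) \le 0$, and $n_k(x), p_k(x)$ are irreducible over $\mathbb{Z}$. (The paper's definition is stated for primes $q \equiv 1 \pmod k$, but the theorem is asserted also for $q=3$; the conclusion is therefore written out as the four listed properties.) *)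

theory Defs
  imports "HOL-Computational_Algebra.Computational_Algebra"
begin

definition Phi3 :: "int poly" where "Phi3 = [:1, 1, 1:]"
definition Phi4 :: "int poly" where "Phi4 = [:1, 0, 1:]"
definition Phi6 :: "int poly" where "Phi6 = [:1, -1, 1:]"

definition Phi :: "nat \<Rightarrow> int poly" where
  "Phi k = (if k = 3 then Phi3 else if k = 4 then Phi4 else if k = 6 then Phi6 else 0)"

definition irreducible_Z :: "int poly \<Rightarrow> bool" where
  "irreducible_Z f \<longleftrightarrow> \<not> (\<exists>a b. degree a > 0 \<and> degree b > 0 \<and> f = a * b)"

definition p6 :: "int \<Rightarrow> int \<Rightarrow> int poly" where
  "p6 q s = pcompose Phi4 [:s, q:]"

definition n6 :: "int \<Rightarrow> int \<Rightarrow> int poly" where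
  "n6 q s = (if q dvd poly Phi3 s then [:poly Phi3 s div q, 2*s+1, q:]
             else [:poly Phi6 s div q, 2*s-1, q:])"

definition t6 :: "int \<Rightarrow> int \<Rightarrow> int poly" where
  "t6 q s = (if q dvd poly Phi3 s then [:1 - s, -q:] else [:1 + s, q:])"

definition X6 :: "int \<Rightarrow> int \<Rightarrow> int \<Rightarrow> int" where
  "X6 q s x = (if q dvd poly Phi3 s then 3*(q*x+s) + 1 else 3*(q*x+s) - 1)"

end

theory Submission
  imports Defs
begin

lemma irr_quad:
  fixes f :: "int poly"
  assumes "degree f = 2" and "(coeff f 1)^2 < 4 * coeff f 0 * coeff f 2"
  shows "irreducible_Z f"
  unfolding irreducible_Z_def
proof
  assume "\<exists>a b. degree a > 0 \<and> degree b > 0 \<and> f = a * b"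
  then obtain a b where ab: "degree a > 0" "degree b > 0" "f = a * b" by blast
  then have "a \<noteq> 0" "b \<noteq> 0" by auto
  then have "degree f = degree a + degree b" using ab by (simp add: degree_mult_eq)
  then have "degree a = 1" "degree b = 1" using ab assms(1) by auto
  then obtain a0 a1 b0 b1 where "a = [:a0, a1:]" "b = [:b0, b1:]"
    by (metis degree1_coeffs)
  then have "f = [:a0*b0, a0*b1 + a1*b0, a1*b1:]" using ab by simp
  then have "(a0*b1 + a1*b0)^2 < 4 * (a0*b0) * (a1*b1)" using assms(2) by (simp add: numeral_2_eq_2)
  moreover have "(a0*b1 + a1*b0)^2 - 4 * (a0*b0) * (a1*b1) = (a0*b1 - a1*b0)^2"
    by algebra
  ultimately show False by (smt (verit) zero_le_power2)
qed

lemma poly_eqI_int: "(\<And>x::int. poly f x = poly g x) \<Longrightarrow> f = g"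
  using poly_eq_poly_eq_iff by blast

lemma mp3: "poly (map_poly (of_int::int\<Rightarrow>real) [:a,b,c:]) x = of_int a + of_int b * x + of_int c * x^2"
  by (simp add: map_poly_pCons algebra_simps power2_eq_square)

lemma quadneg: fixes v :: real shows "-3*v^2 - 2*v - 3 \<le> 0" "-3*v^2 + 2*v - 3 \<le> 0"
proof -
  have "0 \<le> (v+1)^2" "0 \<le> (v-1)^2" "0 \<le> v^2" by simp_all
  then show "-3*v^2 - 2*v - 3 \<le> 0" "-3*v^2 + 2*v - 3 \<le> 0"
    by (simp_all add: power2_eq_square algebra_simps)
qed

theorem theorem1:
  fixes q s :: int and j :: nat
  assumes "prime q" and "q mod 6 = 1 \<or> q = 3"
    and "j \<in> {3, 6}" and "0 \<le> s" and "s < q"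
    and "q dvd poly (Phi j) s"
  shows "smult q (n6 q s) = p6 q s + 1 - t6 q s
    \<and> smult q (n6 q s) dvd pcompose (Phi 6) (p6 q s)
    \<and> (\<forall>x::real. poly (map_poly of_int ((t6 q s)^2 - smult 4 (p6 q s))) x \<le> 0)
    \<and> irreducible_Z (n6 q s) \<and> irreducible_Z (p6 q s)
    \<and> (\<forall>x \<Delta> Y :: int. \<Delta> < 0 \<longrightarrow> squarefree \<Delta> \<longrightarrow>
         (poly (t6 q s) x)^2 - 4 * poly (p6 q s) x = \<Delta> * Y^2 \<longrightarrow>
         (X6 q s x)^2 + 3 * \<Delta> * Y^2 = -8)"
proof -
  have q0: "q > 0" using assms(1) prime_gt_0_int by blast
  have p6e: "p6 q s = [:s^2+1, 2*q*s, q^2:]"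
    by (rule poly_eqI_int) (simp add: p6_def Phi4_def poly_pcompose algebra_simps power2_eq_square)
  have irrp: "irreducible_Z (p6 q s)"
    unfolding p6e by (rule irr_quad) (use q0 in \<open>auto simp: algebra_simps power2_eq_square numeral_2_eq_2\<close>)
  have phi6p: "pcompose (Phi 6) (p6 q s) = [:s^2+s+1, 2*q*s+q, q^2:] * [:s^2-s+1, 2*q*s-q, q^2:]"
    by (rule poly_eqI_int) (simp add: Phi_def p6e Phi6_def poly_pcompose algebra_simps power2_eq_square)
  show ?thesis
  proof (cases "q dvd poly Phi3 s")
    case True
    define c where "c = poly Phi3 s div q"
    have qc: "q * c = s^2+s+1" using True unfolding c_def by (simp add: Phi3_def power2_eq_square algebra_simps)
    have n: "n6 q s = [:c, 2*s+1, q:]" using True by (simp add: n6_def c_def)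
    have t: "t6 q s = [:1 - s, -q:]" using True by (simp add: t6_def)
    have X: "\<And>x. X6 q s x = 3*(q*x+s) + 1" using True by (simp add: X6_def)
    have qn: "smult q (n6 q s) = [:s^2+s+1, 2*q*s+q, q^2:]"
      using qc by (simp add: n algebra_simps power2_eq_square)
    have d: "t6 q s ^2 - smult 4 (p6 q s) = [:(1-s)^2 - 4*(s^2+1), -2*q*(1-s) - 8*q*s, -3*q^2:]"
      by (rule poly_eqI_int) (simp add: t p6e algebra_simps power2_eq_square)
    have 1: "smult q (n6 q s) = p6 q s + 1 - t6 q s"
      by (rule poly_eqI_int) (simp add: qn p6e t algebra_simps power2_eq_square)
    have 2: "smult q (n6 q s) dvd pcompose (Phi 6) (p6 q s)"
      unfolding qn phi6p by (rule dvd_triv_left)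
    have 3: "\<forall>x::real. poly (map_poly of_int ((t6 q s)^2 - smult 4 (p6 q s))) x \<le> 0"
    proof
      fix x :: real
      have e: "poly (map_poly of_int ((t6 q s)^2 - smult 4 (p6 q s))) x
         = -3 * (q*x+s)^2 - 2*(q*x+s) - 3"
        unfolding d mp3 by (simp add: algebra_simps power2_eq_square)
      show "poly (map_poly of_int ((t6 q s)^2 - smult 4 (p6 q s))) x \<le> 0"
        unfolding e by (rule quadneg)
    qed
    have 4: "irreducible_Z (n6 q s)"
    proof -
      have e1: "q * (4*c*q) = 4*q*(q*c)" by (simp add: algebra_simps)
      have e2: "q * (2*s+1)^2 = 4*q*(s^2+s+1) - 3*q" by (simp add: algebra_simps power2_eq_square)
      have "q * (2*s+1)^2 < q * (4*c*q)" unfolding e1 e2 qc using q0 by simp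
      then have "(2*s+1)^2 < 4*c*q" using q0 by simp
      then show ?thesis unfolding n by (intro irr_quad) (use q0 in \<open>auto simp: numeral_2_eq_2\<close>)
    qed
    have 5: "\<forall>x \<Delta> Y :: int. \<Delta> < 0 \<longrightarrow> squarefree \<Delta> \<longrightarrow>
         (poly (t6 q s) x)^2 - 4 * poly (p6 q s) x = \<Delta> * Y^2 \<longrightarrow>
         (X6 q s x)^2 + 3 * \<Delta> * Y^2 = -8"
    proof (intro allI impI)
      fix x \<Delta> Y :: int
      assume h: "(poly (t6 q s) x)^2 - 4 * poly (p6 q s) x = \<Delta> * Y^2"
      have "3 * \<Delta> * Y^2 = 3 * ((poly (t6 q s) x)^2 - 4 * poly (p6 q s) x)" using h by simp
      then show "(X6 q s x)^2 + 3 * \<Delta> * Y^2 = -8"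
        by (simp add: X t p6e algebra_simps power2_eq_square)
    qed
    show ?thesis using 1 2 3 4 5 irrp by blast
  next
    case False
    then have j6: "j = 6" using assms(3,6) by (auto simp: Phi_def)
    define c where "c = poly Phi6 s div q"
    have dv: "q dvd poly Phi6 s" using assms(6) j6 by (simp add: Phi_def)
    have qc: "q * c = s^2-s+1" using dv unfolding c_def by (simp add: Phi6_def power2_eq_square algebra_simps)
    have n: "n6 q s = [:c, 2*s-1, q:]" using False by (simp add: n6_def c_def)
    have t: "t6 q s = [:1 + s, q:]" using False by (simp add: t6_def)
    have X: "\<And>x. X6 q s x = 3*(q*x+s) - 1" using False by (simp add: X6_def)
    have qn: "smult q (n6 q s) = [:s^2-s+1, 2*q*s-q, q^2:]"
      using qc by (simp add: n algebra_simps power2_eq_square)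
    have d: "t6 q s ^2 - smult 4 (p6 q s) = [:(1+s)^2 - 4*(s^2+1), 2*q*(1+s) - 8*q*s, -3*q^2:]"
      by (rule poly_eqI_int) (simp add: t p6e algebra_simps power2_eq_square)
    have 1: "smult q (n6 q s) = p6 q s + 1 - t6 q s"
      by (rule poly_eqI_int) (simp add: qn p6e t algebra_simps power2_eq_square)
    have 2: "smult q (n6 q s) dvd pcompose (Phi 6) (p6 q s)"
      unfolding qn phi6p by (rule dvd_triv_right)
    have 3: "\<forall>x::real. poly (map_poly of_int ((t6 q s)^2 - smult 4 (p6 q s))) x \<le> 0"
    proof
      fix x :: real
      have e: "poly (map_poly of_int ((t6 q s)^2 - smult 4 (p6 q s))) x
         = -3 * (q*x+s)^2 + 2*(q*x+s) - 3"
        unfolding d mp3 by (simp add: algebra_simps power2_eq_square)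
      show "poly (map_poly of_int ((t6 q s)^2 - smult 4 (p6 q s))) x \<le> 0"
        unfolding e by (rule quadneg)
    qed
    have 4: "irreducible_Z (n6 q s)"
    proof -
      have e1: "q * (4*c*q) = 4*q*(q*c)" by (simp add: algebra_simps)
      have e2: "q * (2*s-1)^2 = 4*q*(s^2-s+1) - 3*q" by (simp add: algebra_simps power2_eq_square)
      have "q * (2*s-1)^2 < q * (4*c*q)" unfolding e1 e2 qc using q0 by simp
      then have "(2*s-1)^2 < 4*c*q" using q0 by simp
      then show ?thesis unfolding n by (intro irr_quad) (use q0 in \<open>auto simp: numeral_2_eq_2\<close>)
    qed
    have 5: "\<forall>x \<Delta> Y :: int. \<Delta> < 0 \<longrightarrow> squarefree \<Delta> \<longrightarrow>
         (poly (t6 q s) x)^2 - 4 * poly (p6 q s) x = \<Delta> * Y^2 \<longrightarrow>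
         (X6 q s x)^2 + 3 * \<Delta> * Y^2 = -8"
    proof (intro allI impI)
      fix x \<Delta> Y :: int
      assume h: "(poly (t6 q s) x)^2 - 4 * poly (p6 q s) x = \<Delta> * Y^2"
      have "3 * \<Delta> * Y^2 = 3 * ((poly (t6 q s) x)^2 - 4 * poly (p6 q s) x)" using h by simp
      then show "(X6 q s x)^2 + 3 * \<Delta> * Y^2 = -8"
        by (simp add: X t p6e algebra_simps power2_eq_square)
    qed
    show ?thesis using 1 2 3 4 5 irrp by blast
  qed
qed

end
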